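(* Let $\mathfrak{g}_{(1,0,0,1)}$ be the real Lie algebra with basis $e_1,\dots,e_6$ and nonzero brackets $[e_1,e_5]=e_2$, $[e_2,e_5]=-e_1$, $[e_3,e_6]=e_4$, $[e_4,e_6]=-e_3$. Every derivation $D$ of $\mathfrak{g}_{(1,0,0,1)}$ has the form $De_1=d_{11}e_1-d_{12}e_2$, $De_2=d_{12}e_1+d_{11}e_2$, $De_3=d_{33}e_3-d_{34}e_4$, $De_4=d_{34}e_3+d_{33}e_4$, $De_5=d_{15}e_1+d_{25}e_2$, $De_6=d_{36}e_3+d_{46}e_4$ with $d_{ij}\in\mathbb{R}$. Moreover, for $\eta>0$ and $\omega_\eta=e^{12}+e^{34}+\eta e^{56}$, any derivation $D$ for which there is $\lambda\in\mathfrak{g}_{(1,0,0,1)}^*$ with $\omega_{\eta,D,D}=-d\lambda$ is an inner derivation of $\mathfrak{g}_{(1,0,0,1)}$.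
   Context: $e^{ij}=e^i\wedge e^j$ in the dual basis. For a 2-form $\varphi$ and endomorphism $D$, $\varphi_D(x,y)=\varphi(Dx,y)+\varphi(x,Dy)$, and $\omega_{\eta,D,D}=((\omega_\eta)_D)_D$. $d\lambda(x,y)=-\lambda([x,y])$. An inner derivation is one of the form $\mathrm{ad}_x$. *)

theory Defs
  imports "HOL-Analysis.Analysis"
begin

text \<open>The underlying vector space is real^6; the basis vector e_k is axis k 1
  (indices of type 6 are written 1,...,6; note 6 = 0 in that type, which is harmless).\<close>

definition e :: "6 \<Rightarrow> real^6" where
  "e k = axis k 1"

definition brb :: "6 \<Rightarrow> 6 \<Rightarrow> real^6" where
  "brb i j =
     (if i = 1 \<and> j = 5 then e 2
      else if i = 5 \<and> j = 1 then - e 2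
      else if i = 2 \<and> j = 5 then - e 1
      else if i = 5 \<and> j = 2 then e 1
      else if i = 3 \<and> j = 6 then e 4
      else if i = 6 \<and> j = 3 then - e 4
      else if i = 4 \<and> j = 6 then - e 3
      else if i = 6 \<and> j = 4 then e 3
      else 0)"

definition br :: "real^6 \<Rightarrow> real^6 \<Rightarrow> real^6" where
  "br x y = (\<Sum>i\<in>UNIV. \<Sum>j\<in>UNIV. (x$i * y$j) *\<^sub>R brb i j)"

definition is_derivation :: "(real^6 \<Rightarrow> real^6) \<Rightarrow> bool" where
  "is_derivation D \<longleftrightarrow> linear D \<and> (\<forall>x y. D (br x y) = br (D x) y + br x (D y))"

definition is_inner_derivation :: "(real^6 \<Rightarrow> real^6) \<Rightarrow> bool" where
  "is_inner_derivation D \<longleftrightarrow> (\<exists>x. D = (\<lambda>y. br x y))"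

text \<open>Dual basis e^i and e^{ij} = e^i \<and> e^j (determinant convention).\<close>

definition ew :: "6 \<Rightarrow> 6 \<Rightarrow> real^6 \<Rightarrow> real^6 \<Rightarrow> real" where
  "ew i j x y = x$i * y$j - x$j * y$i"

definition omega :: "real \<Rightarrow> real^6 \<Rightarrow> real^6 \<Rightarrow> real" where
  "omega \<eta> x y = ew 1 2 x y + ew 3 4 x y + \<eta> * ew 5 6 x y"

definition formD :: "(real^6 \<Rightarrow> real^6 \<Rightarrow> real) \<Rightarrow> (real^6 \<Rightarrow> real^6) \<Rightarrow> real^6 \<Rightarrow> real^6 \<Rightarrow> real" where
  "formD \<phi> D x y = \<phi> (D x) y + \<phi> x (D y)"

definition dform :: "(real^6 \<Rightarrow> real) \<Rightarrow> real^6 \<Rightarrow> real^6 \<Rightarrow> real" where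
  "dform lam x y = - lam (br x y)"

end

theory Submission
  imports Defs
begin

lemma exhaust_6:
  fixes x :: 6
  shows "x = 1 \<or> x = 2 \<or> x = 3 \<or> x = 4 \<or> x = 5 \<or> x = 6"
proof (induct x)
  case (of_int z)
  then have "z = 0 \<or> z = 1 \<or> z = 2 \<or> z = 3 \<or> z = 4 \<or> z = 5" by fastforce
  then show ?case by auto
qed

lemma UNIV6: "(UNIV::6 set) = {1,2,3,4,5,6}"
  using exhaust_6 by auto

lemma sum6: "sum f (UNIV::6 set) = f 1 + f 2 + f 3 + f 4 + f 5 + f 6"
  unfolding UNIV6 by (simp add: algebra_simps)

lemma forall6: "(\<forall>i::6. P i) \<longleftrightarrow> P 1 \<and> P 2 \<and> P 3 \<and> P 4 \<and> P 5 \<and> P 6"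
  by (metis exhaust_6)

lemma e_comp: "e j $ k = (if k = j then 1 else 0)"
  by (simp add: e_def axis_def)

lemma br_comp: "br x y $ k = (if k=1 then x$5*y$2 - x$2*y$5 else if k=2 then x$1*y$5 - x$5*y$1
   else if k=3 then x$6*y$4 - x$4*y$6 else if k=4 then x$3*y$6 - x$6*y$3 else 0)"
  unfolding br_def sum6 using exhaust_6[of k]
  by (auto simp: brb_def e_comp)

lemma br_ee: "br (e i) (e j) = brb i j"
proof -
  have "\<And>a b. (e i $ a * e j $ b) *\<^sub>R brb a b = (if b = j then (if a = i then brb a b else 0) else 0)"
    by (simp add: e_comp)
  then show ?thesis unfolding br_def by simp
qed

lemma deriv_form:
  assumes "is_derivation D"
  shows "D (e 1) = D (e 1) $ 1 *\<^sub>R e 1 - D (e 2) $ 1 *\<^sub>R e 2 \<and>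
         D (e 2) = D (e 2) $ 1 *\<^sub>R e 1 + D (e 1) $ 1 *\<^sub>R e 2 \<and>
         D (e 3) = D (e 3) $ 3 *\<^sub>R e 3 - D (e 4) $ 3 *\<^sub>R e 4 \<and>
         D (e 4) = D (e 4) $ 3 *\<^sub>R e 3 + D (e 3) $ 3 *\<^sub>R e 4 \<and>
         D (e 5) = D (e 5) $ 1 *\<^sub>R e 1 + D (e 5) $ 2 *\<^sub>R e 2 \<and>
         D (e 6) = D (e 6) $ 3 *\<^sub>R e 3 + D (e 6) $ 4 *\<^sub>R e 4"
proof -
  have lin: "linear D" and der: "\<And>x y. D (br x y) = br (D x) y + br x (D y)"
    using assms unfolding is_derivation_def by auto
  have E: "\<And>i j k. D (brb i j) $ k = br (D (e i)) (e j) $ k + br (e i) (D (e j)) $ k"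
    using der[of "e i" "e j" for i j] by (simp add: br_ee)
  have N1: "\<And>x. D (- x) = - D x" using lin by (simp add: linear_neg)
  have N2: "D 0 = 0" using lin by (simp add: linear_0)
  note F = E[of 1 2] E[of 1 3] E[of 1 4] E[of 1 5] E[of 1 6]
     E[of 2 3] E[of 2 4] E[of 2 5] E[of 2 6] E[of 3 4] E[of 3 5] E[of 3 6]
     E[of 4 5] E[of 4 6] E[of 5 6]
  note G = F[of 1] F[of 2] F[of 3] F[of 4] F[of 5] F[of 6]
  note [simp] = N1 N2 e_comp br_comp
  note H = G[unfolded brb_def, simplified]
  show ?thesis
    unfolding vec_eq_iff forall6
    apply (simp add: e_comp)
    by (intro conjI; use H in linarith)
qed

lemma linear_br: "linear (br x)"
  by (rule linearI) (auto simp: vec_eq_iff forall6 br_comp algebra_simps)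

lemma Basis6: "b \<in> (Basis :: (real^6) set) \<Longrightarrow> \<exists>i. b = e i"
  by (auto simp: Basis_vec_def e_def)

lemma part2:
  assumes der: "is_derivation D"
    and lam: "linear lam"
    and H: "\<forall>x y. formD (formD (omega \<eta>) D) D x y = - dform lam x y"
  shows "is_inner_derivation D"
proof -
  have lin: "linear D" using der unfolding is_derivation_def by auto
  obtain a b c d p q r s where
    D1: "D (e 1) = a *\<^sub>R e 1 - b *\<^sub>R e 2" and
    D2: "D (e 2) = b *\<^sub>R e 1 + a *\<^sub>R e 2" and
    D3: "D (e 3) = c *\<^sub>R e 3 - d *\<^sub>R e 4" and
    D4: "D (e 4) = d *\<^sub>R e 3 + c *\<^sub>R e 4" and
    D5: "D (e 5) = p *\<^sub>R e 1 + q *\<^sub>R e 2" and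
    D6: "D (e 6) = r *\<^sub>R e 3 + s *\<^sub>R e 4"
    using deriv_form[OF der] by blast
  have lam0: "lam 0 = 0" using lam by (simp add: linear_0)
  have L: "\<And>u v x y. D (u *\<^sub>R x + v *\<^sub>R y) = u *\<^sub>R D x + v *\<^sub>R D y"
    "\<And>u v x y. D (u *\<^sub>R x - v *\<^sub>R y) = u *\<^sub>R D x - v *\<^sub>R D y"
    using lin by (simp_all add: linear_add linear_diff linear_scale)
  have "formD (formD (omega \<eta>) D) D (e 1) (e 2) = - dform lam (e 1) (e 2)" using H by blast
  then have "4 * a^2 = 0"
    by (simp add: formD_def omega_def ew_def dform_def br_ee brb_def lam0 D1 D2 L e_comp power2_eq_square algebra_simps)
  then have a0: "a = 0" by simp
  have "formD (formD (omega \<eta>) D) D (e 3) (e 4) = - dform lam (e 3) (e 4)" using H by blast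
  then have "4 * c^2 = 0"
    by (simp add: formD_def omega_def ew_def dform_def br_ee brb_def lam0 D3 D4 L e_comp power2_eq_square algebra_simps)
  then have c0: "c = 0" by simp
  define x where "x = q *\<^sub>R e 1 - p *\<^sub>R e 2 + s *\<^sub>R e 3 - r *\<^sub>R e 4 + b *\<^sub>R e 5 + d *\<^sub>R e 6"
  have "D = br x"
  proof (rule linear_eq_stdbasis[OF lin linear_br])
    fix v :: "real^6" assume "v \<in> Basis"
    then obtain i where v: "v = e i" using Basis6 by blast
    have "\<forall>i. D (e i) = br x (e i)"
      unfolding forall6 using a0 c0
      by (simp add: D1 D2 D3 D4 D5 D6 x_def vec_eq_iff forall6 br_comp e_comp)
    then show "D v = br x v" using v by simp
  qed
  then show ?thesis unfolding is_inner_derivation_def by blast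
qed

theorem lemma4p8:
  shows "(\<forall>D. is_derivation D \<longrightarrow>
            (\<exists>d11 d12 d33 d34 d15 d25 d36 d46 :: real.
               D (e 1) = d11 *\<^sub>R e 1 - d12 *\<^sub>R e 2 \<and>
               D (e 2) = d12 *\<^sub>R e 1 + d11 *\<^sub>R e 2 \<and>
               D (e 3) = d33 *\<^sub>R e 3 - d34 *\<^sub>R e 4 \<and>
               D (e 4) = d34 *\<^sub>R e 3 + d33 *\<^sub>R e 4 \<and>
               D (e 5) = d15 *\<^sub>R e 1 + d25 *\<^sub>R e 2 \<and>
               D (e 6) = d36 *\<^sub>R e 3 + d46 *\<^sub>R e 4))
       \<and> (\<forall>\<eta>::real. \<forall>D. \<eta> > 0 \<longrightarrow> is_derivation D \<longrightarrow>
            (\<exists>lam. linear lam \<and>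
                (\<forall>x y. formD (formD (omega \<eta>) D) D x y = - dform lam x y)) \<longrightarrow>
            is_inner_derivation D)"
  proof (intro conjI allI impI)
  fix D :: "real^6 \<Rightarrow> real^6" assume "is_derivation D"
  from deriv_form[OF this] show "\<exists>d11 d12 d33 d34 d15 d25 d36 d46 :: real.
               D (e 1) = d11 *\<^sub>R e 1 - d12 *\<^sub>R e 2 \<and>
               D (e 2) = d12 *\<^sub>R e 1 + d11 *\<^sub>R e 2 \<and>
               D (e 3) = d33 *\<^sub>R e 3 - d34 *\<^sub>R e 4 \<and>
               D (e 4) = d34 *\<^sub>R e 3 + d33 *\<^sub>R e 4 \<and>
               D (e 5) = d15 *\<^sub>R e 1 + d25 *\<^sub>R e 2 \<and>
               D (e 6) = d36 *\<^sub>R e 3 + d46 *\<^sub>R e 4" by blast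
next
  fix \<eta> :: real and D :: "real^6 \<Rightarrow> real^6"
  assume "is_derivation D" and "\<exists>lam. linear lam \<and>
                (\<forall>x y. formD (formD (omega \<eta>) D) D x y = - dform lam x y)"
  then show "is_inner_derivation D" using part2 by blast
qed

end
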